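(* Let $G=(V,E,H)$ be a HEDG and $X,Y,Z,U\subseteq V$ with $U\cap(X\cup Y\cup Z)=\emptyset$. Then $X\perp^d_G Y\mid Z$ if and only if $X\perp^d_{G^{\mathrm{marg}\setminus U}}Y\mid Z$.
   Context: HEDG $G=(V,E,H)$: $V$ finite, $E\subseteq V\times V$ (self-loops allowed), $H$ a simplicial complex on $V$ (contains singletons, closed under subsets); for distinct $v,w$, $v\leftrightarrow w$ means $\{v,w\}\in H$. $\mathrm{Anc}^G(Z)$: nodes with a directed path into $Z$ (including $Z$). Marginalization $G^{\mathrm{marg}\setminus U}=(V\setminus U,E',H')$: $v_1\to v_2\in E'$ iff $G$ has a directed path $v_1\to u_1\to\cdots\to u_r\to v_2$ ($r\ge0$, all $u_i\in U$); $F'\subseteq V\setminus U$ is in $H'$ iff there is $F\in H$, $F\subseteq F'\cup U$, such that each $v\in F'$ lies in $F\setminus U$ or is reached by a directed path $u_1\to\cdots\to u_r\to v$ ($r\ge1$, $u_i\in U$, $u_1\in F\cap U$). A path is a node sequence $v_1,\dots,v_n$ ($n\ge1$, repetitions allowed) with consecutive nodes joined by $\to$, $\leftarrow$ or $\leftrightarrow$. It is $Z$-blocked if $v_1\in Z$ or $v_n\in Z$, or some intermediate $v_i$ is a collider (both adjacent edges have an arrowhead at $v_i$) with $v_i\notin\mathrm{Anc}(Z)$, or some intermediate non-collider lies in $Z$. $X\perp^d Y\mid Z$ iff every path with one endnode in $X$ and the other in $Y$ is $Z$-blocked (ancestors and paths taken in the respective HEDG). *)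

theory Defs
  imports Main
begin

record 'a hedg =
  nodes :: "'a set"
  edges :: "('a \<times> 'a) set"
  hyper :: "'a set set"

definition is_hedg :: "'a hedg \<Rightarrow> bool" where
  "is_hedg G \<longleftrightarrow> finite (nodes G) \<and> edges G \<subseteq> nodes G \<times> nodes G
     \<and> (\<forall>F\<in>hyper G. F \<subseteq> nodes G)
     \<and> (\<forall>v\<in>nodes G. {v} \<in> hyper G)
     \<and> (\<forall>F\<in>hyper G. \<forall>F'. F' \<subseteq> F \<longrightarrow> F' \<in> hyper G)"

definition dpath :: "('a \<times> 'a) set \<Rightarrow> 'a list \<Rightarrow> bool" where
  "dpath E xs \<longleftrightarrow> (\<forall>i. Suc i < length xs \<longrightarrow> (xs ! i, xs ! Suc i) \<in> E)"

definition anc :: "'a hedg \<Rightarrow> 'a set \<Rightarrow> 'a set" where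
  "anc G Z = {v. \<exists>z\<in>Z. (v, z) \<in> (edges G)\<^sup>*}"

text \<open>Kinds of edges between consecutive path nodes v_i, v_(i+1):
  Fwd: v_i -> v_(i+1);  Bwd: v_i <- v_(i+1);  Bi: v_i <-> v_(i+1).\<close>
datatype ekind = Fwd | Bwd | Bi

definition edge_ok :: "'a hedg \<Rightarrow> 'a \<Rightarrow> ekind \<Rightarrow> 'a \<Rightarrow> bool" where
  "edge_ok G v k w \<longleftrightarrow> (case k of
      Fwd \<Rightarrow> (v, w) \<in> edges G
    | Bwd \<Rightarrow> (w, v) \<in> edges G
    | Bi \<Rightarrow> v \<noteq> w \<and> {v, w} \<in> hyper G)"

definition is_path :: "'a hedg \<Rightarrow> 'a list \<Rightarrow> ekind list \<Rightarrow> bool" where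
  "is_path G vs es \<longleftrightarrow> vs \<noteq> [] \<and> set vs \<subseteq> nodes G \<and> length es = length vs - 1
     \<and> (\<forall>i < length es. edge_ok G (vs ! i) (es ! i) (vs ! Suc i))"

definition head_right :: "ekind \<Rightarrow> bool" where
  "head_right k \<longleftrightarrow> k = Fwd \<or> k = Bi"
definition head_left :: "ekind \<Rightarrow> bool" where
  "head_left k \<longleftrightarrow> k = Bwd \<or> k = Bi"

text \<open>Intermediate node i (0 < i < length vs - 1) is a collider.\<close>
definition collider :: "ekind list \<Rightarrow> nat \<Rightarrow> bool" where
  "collider es i \<longleftrightarrow> head_right (es ! (i - 1)) \<and> head_left (es ! i)"

definition blocked :: "'a hedg \<Rightarrow> 'a set \<Rightarrow> 'a list \<Rightarrow> ekind list \<Rightarrow> bool" where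
  "blocked G Z vs es \<longleftrightarrow> hd vs \<in> Z \<or> last vs \<in> Z \<or>
     (\<exists>i. 0 < i \<and> Suc i < length vs \<and>
        ((collider es i \<and> vs ! i \<notin> anc G Z) \<or> (\<not> collider es i \<and> vs ! i \<in> Z)))"

definition dsep :: "'a hedg \<Rightarrow> 'a set \<Rightarrow> 'a set \<Rightarrow> 'a set \<Rightarrow> bool" where
  "dsep G X Y Z \<longleftrightarrow> (\<forall>vs es. is_path G vs es \<longrightarrow>
      ((hd vs \<in> X \<and> last vs \<in> Y) \<or> (hd vs \<in> Y \<and> last vs \<in> X)) \<longrightarrow> blocked G Z vs es)"

definition marg :: "'a hedg \<Rightarrow> 'a set \<Rightarrow> 'a hedg" where
  "marg G U = \<lparr> nodes = nodes G - U,
     edges = {(v1, v2). v1 \<in> nodes G - U \<and> v2 \<in> nodes G - U \<and>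
                (\<exists>us. set us \<subseteq> U \<and> dpath (edges G) (v1 # us @ [v2]))},
     hyper = {F'. F' \<subseteq> nodes G - U \<and> (\<exists>F\<in>hyper G. F \<subseteq> F' \<union> U \<and>
                (\<forall>v\<in>F'. v \<in> F - U \<or>
                   (\<exists>us. us \<noteq> [] \<and> set us \<subseteq> U \<and> hd us \<in> F \<inter> U \<and> dpath (edges G) (us @ [v]))))} \<rparr>"

end

theory Submission
  imports Defs
begin


lemma dpath_Nil[simp]: "dpath E []" by (simp add: dpath_def)
lemma dpath_single[simp]: "dpath E [a]" by (simp add: dpath_def)
lemma dpath_Cons2[simp]: "dpath E (a # b # xs) \<longleftrightarrow> (a,b) \<in> E \<and> dpath E (b # xs)"
  apply (auto simp: dpath_def)
  apply (case_tac i) apply auto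
  done
lemma dpath_app: "dpath E (xs @ [a]) \<Longrightarrow> (a,b) \<in> E \<Longrightarrow> dpath E (xs @ [a, b])"
  by (induction xs rule: induct_list012) auto
lemma dpath_append: "dpath E (xs @ y # ys) \<longleftrightarrow> dpath E (xs @ [y]) \<and> dpath E (y # ys)"
  by (induction xs rule: induct_list012) auto
lemma dpath_rtrancl: "dpath E (a # xs) \<Longrightarrow> (a, last (a # xs)) \<in> E\<^sup>*"
  by (induction xs arbitrary: a) (auto intro: converse_rtrancl_into_rtrancl)




definition cnd :: "'a hedg \<Rightarrow> 'a set \<Rightarrow> 'a set \<Rightarrow> bool \<Rightarrow> ekind \<Rightarrow> 'a \<Rightarrow> bool" where
  "cnd G Z U h k v \<longleftrightarrow> (if h \<and> head_left k then v \<in> anc G Z \<and> v \<notin> U else v \<notin> Z)"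

inductive reach :: "'a hedg \<Rightarrow> 'a set \<Rightarrow> 'a set \<Rightarrow> 'a \<Rightarrow> 'a \<Rightarrow> bool \<Rightarrow> bool"
  for G Z U x where
  rstart: "x \<in> nodes G \<Longrightarrow> x \<notin> Z \<Longrightarrow> reach G Z U x x False"
| rstep: "reach G Z U x v h \<Longrightarrow> edge_ok G v k w \<Longrightarrow> w \<in> nodes G \<Longrightarrow> cnd G Z U h k v
     \<Longrightarrow> reach G Z U x w (head_right k)"

definition okint :: "'a hedg \<Rightarrow> 'a set \<Rightarrow> 'a list \<Rightarrow> ekind list \<Rightarrow> bool" where
  "okint G Z vs es \<longleftrightarrow> (\<forall>i. 0<i \<and> Suc i < length vs \<longrightarrow>
     (collider es i \<longrightarrow> vs!i \<in> anc G Z) \<and> (\<not>collider es i \<longrightarrow> vs!i \<notin> Z))"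

lemma reach_path:
  assumes "reach G Z U x y h" "U = {}"
  shows "\<exists>vs es. is_path G vs es \<and> hd vs = x \<and> last vs = y \<and> x \<notin> Z \<and> okint G Z vs es
     \<and> h = (es \<noteq> [] \<and> head_right (last es))"
  using assms
proof (induction rule: reach.induct)
  case (rstart)
  then show ?case
    by (rule_tac x="[x]" in exI, rule_tac x="[]" in exI) (auto simp: is_path_def okint_def)
next
  case (rstep v h k w)
  then obtain vs es where P: "is_path G vs es" "hd vs = x" "last vs = v" "x \<notin> Z" "okint G Z vs es"
     "h = (es \<noteq> [] \<and> head_right (last es))" by blast
  have ne: "vs \<noteq> []" and len: "length es = length vs - 1" and sub: "set vs \<subseteq> nodes G"
    and eo: "\<forall>i < length es. edge_ok G (vs ! i) (es ! i) (vs ! Suc i)"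
    using P(1) by (auto simp: is_path_def)
  have lv: "vs ! length es = v" using ne len P(3) by (simp add: last_conv_nth)
  have ip: "is_path G (vs @ [w]) (es @ [k])"
    unfolding is_path_def
  proof (intro conjI allI impI)
    show "set (vs @ [w]) \<subseteq> nodes G" using sub rstep by auto
    show "length (es @ [k]) = length (vs @ [w]) - 1" using len ne by simp
    fix i assume i: "i < length (es @ [k])"
    show "edge_ok G ((vs @ [w]) ! i) ((es @ [k]) ! i) ((vs @ [w]) ! Suc i)"
    proof (cases "i < length es")
      case True
      then show ?thesis using eo len by (auto simp: nth_append)
    next
      case False
      then have "i = length es" using i by simp
      then show ?thesis using lv len ne rstep(2) by (auto simp: nth_append)
    qed
  qed simp
  have ok: "okint G Z (vs @ [w]) (es @ [k])"
    unfolding okint_def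
  proof (intro allI impI)
    fix i assume i: "0 < i \<and> Suc i < length (vs @ [w])"
    show "(collider (es @ [k]) i \<longrightarrow> (vs @ [w]) ! i \<in> anc G Z) \<and>
          (\<not> collider (es @ [k]) i \<longrightarrow> (vs @ [w]) ! i \<notin> Z)"
    proof (cases "Suc i < length vs")
      case True
      have "i < length es" "i - 1 < length es" using True len i by auto
      then have "collider (es @ [k]) i = collider es i"
        by (simp add: collider_def nth_append)
      then show ?thesis using P(5) True i unfolding okint_def by (auto simp: nth_append)
    next
      case False
      then have ii: "i = length es" using i len ne by auto
      have "es \<noteq> []" using ii i by auto
      then have "last es = es ! (i - 1)" using ii by (simp add: last_conv_nth)
      then have "collider (es @ [k]) i = (h \<and> head_left k)" using ii P(6) i
        by (auto simp: collider_def nth_append)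
      moreover have "(vs @ [w]) ! i = v" using ii lv len ne by (simp add: nth_append)
      ultimately show ?thesis using rstep(4) rstep(6) by (auto simp: cnd_def split: if_splits)
    qed
  qed
  show ?case
    apply (rule exI[of _ "vs @ [w]"], rule exI[of _ "es @ [k]"])
    using ip ok P ne by auto
qed

lemma path_reach:
  assumes "is_path G vs es" "hd vs \<notin> Z" "okint G Z vs es"
  shows "n < length vs \<Longrightarrow> reach G Z {} (hd vs) (vs!n) (n \<noteq> 0 \<and> head_right (es!(n-1)))"
proof (induction n)
  case 0
  have "vs \<noteq> []" "set vs \<subseteq> nodes G" using assms(1) by (auto simp: is_path_def)
  then show ?case using assms(2) by (auto simp: hd_conv_nth intro!: rstart)
next
  case (Suc n)
  have len: "length es = length vs - 1" and sub: "set vs \<subseteq> nodes G"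
    and eo: "\<forall>i < length es. edge_ok G (vs ! i) (es ! i) (vs ! Suc i)"
    using assms(1) by (auto simp: is_path_def)
  have IH: "reach G Z {} (hd vs) (vs!n) (n \<noteq> 0 \<and> head_right (es!(n-1)))" using Suc by simp
  have c: "cnd G Z {} (n \<noteq> 0 \<and> head_right (es!(n-1))) (es!n) (vs!n)"
  proof (cases "n = 0")
    case True
    have "vs \<noteq> []" using Suc(2) by auto
    then show ?thesis using True assms(2) Suc(2) by (auto simp: cnd_def hd_conv_nth)
  next
    case False
    then show ?thesis using assms(3) Suc(2) unfolding okint_def cnd_def collider_def by auto
  qed
  have "reach G Z {} (hd vs) (vs!Suc n) (head_right (es!n))"
    by (rule rstep[OF IH]) (use eo len Suc(2) sub c in auto)
  then show ?case by simp
qed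

lemma dsep_reach:
  "dsep G X Y Z \<longleftrightarrow> \<not>(\<exists>x y h. ((x\<in>X \<and> y\<in>Y) \<or> (x\<in>Y \<and> y\<in>X)) \<and> reach G Z {} x y h \<and> y \<notin> Z)"
proof
  assume d: "dsep G X Y Z"
  show "\<not>(\<exists>x y h. ((x\<in>X \<and> y\<in>Y) \<or> (x\<in>Y \<and> y\<in>X)) \<and> reach G Z {} x y h \<and> y \<notin> Z)"
  proof
    assume "\<exists>x y h. ((x\<in>X \<and> y\<in>Y) \<or> (x\<in>Y \<and> y\<in>X)) \<and> reach G Z {} x y h \<and> y \<notin> Z"
    then obtain x y h where A: "((x\<in>X \<and> y\<in>Y) \<or> (x\<in>Y \<and> y\<in>X))" "reach G Z {} x y h" "y \<notin> Z"
      by blast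
    from reach_path[OF A(2)] obtain vs es where P: "is_path G vs es" "hd vs = x" "last vs = y"
      "x \<notin> Z" "okint G Z vs es" by auto
    have "blocked G Z vs es" using d P A(1) unfolding dsep_def by auto
    then show False using P A(3) unfolding blocked_def okint_def by blast
  qed
next
  assume n: "\<not>(\<exists>x y h. ((x\<in>X \<and> y\<in>Y) \<or> (x\<in>Y \<and> y\<in>X)) \<and> reach G Z {} x y h \<and> y \<notin> Z)"
  show "dsep G X Y Z" unfolding dsep_def
  proof (intro allI impI)
    fix vs es assume P: "is_path G vs es" "(hd vs \<in> X \<and> last vs \<in> Y) \<or> (hd vs \<in> Y \<and> last vs \<in> X)"
    show "blocked G Z vs es"
    proof (rule ccontr)
      assume nb: "\<not> blocked G Z vs es"
      have ok: "okint G Z vs es" "hd vs \<notin> Z" "last vs \<notin> Z"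
        using nb unfolding blocked_def okint_def by auto
      have ne: "vs \<noteq> []" using P(1) by (auto simp: is_path_def)
      have "reach G Z {} (hd vs) (vs!(length vs - 1)) (length vs - 1 \<noteq> 0 \<and> head_right (es!(length vs - 1 - 1)))"
        by (rule path_reach[OF P(1) ok(2) ok(1)]) (use ne in simp)
      then show False using n P(2) ok ne by (auto simp: last_conv_nth)
    qed
  qed
qed




lemma marg_simps[simp]:
  "nodes (marg G U) = nodes G - U"
  "edges (marg G U) = {(v1, v2). v1 \<in> nodes G - U \<and> v2 \<in> nodes G - U \<and>
                (\<exists>us. set us \<subseteq> U \<and> dpath (edges G) (v1 # us @ [v2]))}"
  "hyper (marg G U) = {F'. F' \<subseteq> nodes G - U \<and> (\<exists>F\<in>hyper G. F \<subseteq> F' \<union> U \<and>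
                (\<forall>v\<in>F'. v \<in> F - U \<or>
                   (\<exists>us. us \<noteq> [] \<and> set us \<subseteq> U \<and> hd us \<in> F \<inter> U \<and> dpath (edges G) (us @ [v]))))}"
  by (simp_all add: marg_def)

lemma anc_marg_sub: "anc (marg G U) Z \<subseteq> anc G Z"
proof
  fix v assume "v \<in> anc (marg G U) Z"
  then obtain z where z: "z \<in> Z" "(v, z) \<in> (edges (marg G U))\<^sup>*" by (auto simp: anc_def)
  have "(v, z) \<in> (edges G)\<^sup>*" using z(2)
  proof (induction rule: rtrancl_induct)
    case (step y w)
    then obtain us where "dpath (edges G) (y # us @ [w])" by auto
    from dpath_rtrancl[OF this] have "(y, w) \<in> (edges G)\<^sup>*" by simp
    then show ?case using step by auto
  qed simp
  then show "v \<in> anc G Z" using z by (auto simp: anc_def)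
qed

lemma anc_to_marg:
  assumes hg: "is_hedg G" and ZU: "Z \<inter> U = {}" and ZN: "Z \<subseteq> nodes G"
    and v: "v \<in> anc G Z" "v \<notin> U" "v \<in> nodes G"
  shows "v \<in> anc (marg G U) Z"
proof -
  have E: "edges G \<subseteq> nodes G \<times> nodes G" using hg by (auto simp: is_hedg_def)
  obtain z where z: "z \<in> Z" "(v, z) \<in> (edges G)\<^sup>*" using v by (auto simp: anc_def)
  have zz: "z \<notin> U" "z \<in> nodes G" using z ZU ZN by auto
  have "(v \<in> nodes G \<longrightarrow> v \<notin> U \<longrightarrow> (v, z) \<in> (edges (marg G U))\<^sup>*) \<and>
        (v \<in> U \<longrightarrow> (\<exists>us c. set us \<subseteq> U \<and> c \<in> nodes G \<and> c \<notin> U \<and> dpath (edges G) (v # us @ [c])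
              \<and> (c, z) \<in> (edges (marg G U))\<^sup>*))"
    using z(2)
  proof (induction rule: converse_rtrancl_induct)
    case base
    then show ?case using zz by auto
  next
    case (step y y')
    have yy: "y \<in> nodes G" "y' \<in> nodes G" using step(1) E by auto
    show ?case
    proof (cases "y' \<in> U")
      case True
      then obtain us c where uc: "set us \<subseteq> U" "c \<in> nodes G" "c \<notin> U"
        "dpath (edges G) (y' # us @ [c])" "(c, z) \<in> (edges (marg G U))\<^sup>*" using step(3) by blast
      have dp: "dpath (edges G) (y # (y' # us) @ [c])" using uc(4) step(1) by simp
      show ?thesis
      proof (intro conjI impI)
        assume "y \<notin> U"
        then have "(y, c) \<in> edges (marg G U)" using dp uc yy True by (auto intro!: exI[of _ "y' # us"])
        then show "(y, z) \<in> (edges (marg G U))\<^sup>*" using uc(5) by (rule converse_rtrancl_into_rtrancl)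
      next
        assume "y \<in> U"
        then show "\<exists>us c. set us \<subseteq> U \<and> c \<in> nodes G \<and> c \<notin> U \<and> dpath (edges G) (y # us @ [c])
              \<and> (c, z) \<in> (edges (marg G U))\<^sup>*"
          using dp uc True by (intro exI[of _ "y' # us"] exI[of _ c]) auto
      qed
    next
      case False
      then have r: "(y', z) \<in> (edges (marg G U))\<^sup>*" using step(3) yy by auto
      show ?thesis
      proof (intro conjI impI)
        assume "y \<notin> U"
        then have "(y, y') \<in> edges (marg G U)" using step(1) yy False
          by (auto intro!: exI[of _ "[]"])
        then show "(y, z) \<in> (edges (marg G U))\<^sup>*" using r by (rule converse_rtrancl_into_rtrancl)
      next
        assume "y \<in> U"
        then show "\<exists>us c. set us \<subseteq> U \<and> c \<in> nodes G \<and> c \<notin> U \<and> dpath (edges G) (y # us @ [c])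
              \<and> (c, z) \<in> (edges (marg G U))\<^sup>*"
          using step(1) r yy False by (intro exI[of _ "[]"] exI[of _ y']) auto
      qed
    qed
  qed
  then have "(v, z) \<in> (edges (marg G U))\<^sup>*" using v by auto
  then show ?thesis using z by (auto simp: anc_def)
qed

lemma L_fwd:
  assumes hg: "is_hedg G"
  shows "reach G Z {} x a h \<Longrightarrow> a \<notin> Z \<Longrightarrow> set us \<inter> Z = {} \<Longrightarrow>
    dpath (edges G) (a # us @ [b]) \<Longrightarrow> reach G Z {} x b True"
proof (induction us arbitrary: a h)
  case Nil
  have "reach G Z {} x b (head_right Fwd)"
    by (rule rstep[OF Nil(1)]) (use Nil hg in \<open>auto simp: edge_ok_def cnd_def head_left_def is_hedg_def\<close>)
  then show ?case by (simp add: head_right_def)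
next
  case (Cons u us)
  have "reach G Z {} x u (head_right Fwd)"
    by (rule rstep[OF Cons(2)]) (use Cons hg in \<open>auto simp: edge_ok_def cnd_def head_left_def is_hedg_def\<close>)
  then have "reach G Z {} x u True" by (simp add: head_right_def)
  then show ?case using Cons by auto
qed

lemma L_bwd:
  assumes hg: "is_hedg G"
  shows "reach G Z {} x a h \<Longrightarrow> (if h then a \<in> anc G Z else a \<notin> Z) \<Longrightarrow> set us \<inter> Z = {} \<Longrightarrow>
    dpath (edges G) (b # us @ [a]) \<Longrightarrow> reach G Z {} x b False"
proof (induction us arbitrary: a h rule: rev_induct)
  case Nil
  have "reach G Z {} x b (head_right Bwd)"
    by (rule rstep[OF Nil(1)]) (use Nil hg in \<open>auto simp: edge_ok_def cnd_def head_left_def is_hedg_def\<close>)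
  then show ?case by (simp add: head_right_def)
next
  case (snoc u us)
  have d: "dpath (edges G) ((b # us) @ [u])" "(u, a) \<in> edges G"
    using snoc(5) dpath_append[of "edges G" "b # us" u "[a]"] by auto
  have "reach G Z {} x u (head_right Bwd)"
    by (rule rstep[OF snoc(2)]) (use snoc d hg in \<open>auto simp: edge_ok_def cnd_def head_left_def is_hedg_def\<close>)
  then have "reach G Z {} x u False" by (simp add: head_right_def)
  then show ?case using snoc d by auto
qed




definition fr :: "'a hedg \<Rightarrow> 'a set \<Rightarrow> 'a set \<Rightarrow> 'a \<Rightarrow> bool" where
  "fr G U F u \<longleftrightarrow> u \<in> F - U \<or> (\<exists>us. us \<noteq> [] \<and> set us \<subseteq> U \<and> hd us \<in> F \<inter> U \<and> dpath (edges G) (us @ [u]))"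

lemma hyper_pair:
  assumes "is_hedg G" "F \<in> hyper G" "a \<in> F" "b \<in> F" shows "{a, b} \<in> hyper G"
proof -
  have c: "\<forall>F\<in>hyper G. \<forall>F'. F' \<subseteq> F \<longrightarrow> F' \<in> hyper G" using assms(1) by (simp add: is_hedg_def)
  have "{a, b} \<subseteq> F" using assms(3,4) by simp
  then show ?thesis using c[rule_format, OF assms(2)] by simp
qed

lemma hyper_nodes:
  assumes "is_hedg G" "F \<in> hyper G" "a \<in> F" shows "a \<in> nodes G"
proof -
  have c: "\<forall>F\<in>hyper G. F \<subseteq> nodes G" using assms(1) by (simp add: is_hedg_def)
  then show ?thesis using assms(2,3) by auto
qed

lemma L_bi:
  assumes hg: "is_hedg G" and ZU: "Z \<inter> U = {}"
    and r: "reach G Z {} x v h" and c0: "if h then v \<in> anc G Z else v \<notin> Z"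
    and vw: "v \<noteq> w" "v \<notin> U" "w \<notin> U" and F: "F \<in> hyper G" and fv: "fr G U F v" and fw: "fr G U F w"
  shows "reach G Z {} x w True"
proof -
  obtain c h' where c: "c \<in> F" "reach G Z {} x c h'" "c = v \<or> c \<in> U"
      "if h' then c \<in> anc G Z else c \<notin> Z"
  proof (cases "v \<in> F - U")
    case True
    then show ?thesis using that[of v h] r c0 by auto
  next
    case False
    then obtain us where us: "us \<noteq> []" "set us \<subseteq> U" "hd us \<in> F \<inter> U" "dpath (edges G) (us @ [v])"
      using fv unfolding fr_def by blast
    obtain c t where ct: "us = c # t" using us(1) by (cases us) auto
    have "reach G Z {} x c False"
      by (rule L_bwd[OF hg r c0]) (use us ct ZU in auto)
    then show ?thesis using that[of c False] us ct ZU by auto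
  qed
  show ?thesis
  proof (cases "w \<in> F - U")
    case True
    have cw: "c \<noteq> w" using c(3) vw True by auto
    have "reach G Z {} x w (head_right Bi)"
      by (rule rstep[OF c(2)])
        (use c cw True hyper_pair[OF hg F c(1), of w] hyper_nodes[OF hg F, of w] in
          \<open>auto simp: edge_ok_def cnd_def head_left_def\<close>)
    then show ?thesis by (simp add: head_right_def)
  next
    case False
    then obtain us where us: "us \<noteq> []" "set us \<subseteq> U" "hd us \<in> F \<inter> U" "dpath (edges G) (us @ [w])"
      using fw unfolding fr_def by blast
    obtain c2 t where ct: "us = c2 # t" using us(1) by (cases us) auto
    show ?thesis
    proof (cases "c2 = c")
      case True
      have "c \<notin> Z" using True ct us ZU by auto
      show ?thesis
        by (rule L_fwd[OF hg c(2) \<open>c \<notin> Z\<close>]) (use us ct ZU True in auto)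
    next
      case False
      have "reach G Z {} x c2 (head_right Bi)"
        by (rule rstep[OF c(2)])
          (use c False ct us hyper_pair[OF hg F c(1), of c2] hyper_nodes[OF hg F, of c2] in
            \<open>auto simp: edge_ok_def cnd_def head_left_def\<close>)
      then have r2: "reach G Z {} x c2 True" by (simp add: head_right_def)
      have "c2 \<notin> Z" using ct us ZU by auto
      show ?thesis
        by (rule L_fwd[OF hg r2 \<open>c2 \<notin> Z\<close>]) (use us ct ZU in auto)
    qed
  qed
qed

lemma dir1:
  assumes hg: "is_hedg G" and ZU: "Z \<inter> U = {}"
  shows "reach (marg G U) Z {} x y h \<Longrightarrow> reach G Z {} x y h"
proof (induction rule: reach.induct)
  case rstart
  then show ?case by (auto intro: reach.rstart)
next
  case (rstep v h k w)
  have cG: "cnd G Z {} h k v" using \<open>cnd (marg G U) Z {} h k v\<close> anc_marg_sub[of G U Z] by (auto simp: cnd_def)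
  show ?case
  proof (cases k)
    case Fwd
    then obtain us where "set us \<subseteq> U" "dpath (edges G) (v # us @ [w])"
      using rstep.hyps(2) by (auto simp: edge_ok_def)
    then show ?thesis using L_fwd[OF hg rstep.IH, of us w] cG Fwd ZU
      by (auto simp: cnd_def head_left_def head_right_def)
  next
    case Bwd
    then obtain us where "set us \<subseteq> U" "dpath (edges G) (w # us @ [v])"
      using rstep.hyps(2) by (auto simp: edge_ok_def)
    then show ?thesis using L_bwd[OF hg rstep.IH, of us w] cG Bwd ZU
      by (auto simp: cnd_def head_left_def head_right_def split: if_splits)
  next
    case Bi
    then have e: "v \<noteq> w" "{v, w} \<in> hyper (marg G U)" using rstep.hyps(2) by (auto simp: edge_ok_def)
    have "{v, w} \<subseteq> nodes G - U \<and> (\<exists>F\<in>hyper G. F \<subseteq> {v, w} \<union> U \<and>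
                (\<forall>u\<in>{v, w}. fr G U F u))" using e(2) unfolding marg_simps fr_def by (simp only: mem_Collect_eq)
    then obtain F where F: "F \<in> hyper G" "fr G U F v" "fr G U F w" "v \<notin> U" "w \<notin> U"
      by blast
    have "reach G Z {} x w True"
      by (rule L_bi[OF hg ZU rstep.IH _ e(1) F(4,5) F(1-3)])
        (use cG Bi in \<open>auto simp: cnd_def head_left_def\<close>)
    then show ?thesis using Bi by (simp add: head_right_def)
  qed
qed




lemma reach_nodes: "reach G Z U x v h \<Longrightarrow> v \<in> nodes G"
  by (induction rule: reach.induct) auto

lemma detour:
  assumes hg: "is_hedg G" and ZU: "Z \<inter> U = {}"
  shows "(v, z) \<in> (edges G)\<^sup>* \<Longrightarrow> z \<in> Z \<Longrightarrow> reach G Z U x v h \<Longrightarrow> v \<notin> Z \<Longrightarrow> v \<in> U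
     \<Longrightarrow> reach G Z U x v False"
proof (induction arbitrary: h rule: converse_rtrancl_induct)
  case base
  then show ?case using ZU by auto
next
  case (step v v')
  have nn: "v \<in> nodes G" "v' \<in> nodes G" using step(1) hg by (auto simp: is_hedg_def)
  have "reach G Z U x v' (head_right Fwd)"
    by (rule rstep[OF step(5)]) (use step nn in \<open>auto simp: edge_ok_def cnd_def head_left_def\<close>)
  then have r': "reach G Z U x v' True" by (simp add: head_right_def)
  have a': "v' \<in> anc G Z" using step(2,4) by (auto simp: anc_def)
  show ?case
  proof (cases "v' \<in> U")
    case True
    then have "v' \<notin> Z" using ZU by auto
    then have r2: "reach G Z U x v' False" using step(3)[OF step(4) r'] True by simp
    have "reach G Z U x v (head_right Bwd)"
      by (rule rstep[OF r2]) (use step nn \<open>v' \<notin> Z\<close> in \<open>auto simp: edge_ok_def cnd_def head_left_def\<close>)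
    then show ?thesis by (simp add: head_right_def)
  next
    case False
    have "reach G Z U x v (head_right Bwd)"
      by (rule rstep[OF r']) (use step nn False a' in \<open>auto simp: edge_ok_def cnd_def head_left_def\<close>)
    then show ?thesis by (simp add: head_right_def)
  qed
qed

lemma phase1:
  assumes hg: "is_hedg G" and ZU: "Z \<inter> U = {}"
  shows "reach G Z {} x v h \<Longrightarrow> reach G Z U x v h"
proof (induction rule: reach.induct)
  case rstart
  then show ?case by (rule reach.rstart)
next
  case (rstep v h k w)
  show ?case
  proof (cases "h \<and> head_left k \<and> v \<in> U")
    case False
    then show ?thesis using rstep by (auto intro!: reach.rstep simp: cnd_def)
  next
    case True
    then have va: "v \<in> anc G Z" using rstep.hyps(4) by (auto simp: cnd_def)
    then obtain z where z: "z \<in> Z" "(v, z) \<in> (edges G)\<^sup>*" by (auto simp: anc_def)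
    have vZ: "v \<notin> Z" using True ZU by auto
    have "reach G Z U x v False" using detour[OF hg ZU z(2) z(1) rstep.IH vZ] True by simp
    then show ?thesis using rstep vZ by (auto intro!: reach.rstep simp: cnd_def)
  qed
qed




definition fr2 :: "'a hedg \<Rightarrow> 'a set \<Rightarrow> 'a set \<Rightarrow> 'a \<Rightarrow> bool" where
  "fr2 G U F u \<longleftrightarrow> u \<in> F \<or> (\<exists>us. us \<noteq> [] \<and> set us \<subseteq> U \<and> hd us \<in> F \<inter> U \<and> dpath (edges G) (us @ [u]))"

lemma fr2_fr: "u \<notin> U \<Longrightarrow> fr2 G U F u \<longleftrightarrow> fr G U F u"
  by (auto simp: fr2_def fr_def)

lemma fr2_step: "fr2 G U F v \<Longrightarrow> v \<in> U \<Longrightarrow> (v, w) \<in> edges G \<Longrightarrow> fr2 G U F w"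
  unfolding fr2_def
proof (elim disjE exE conjE)
  assume "v \<in> F" "v \<in> U" "(v, w) \<in> edges G"
  then show "w \<in> F \<or> (\<exists>us. us \<noteq> [] \<and> set us \<subseteq> U \<and> hd us \<in> F \<inter> U \<and> dpath (edges G) (us @ [w]))"
    by (intro disjI2 exI[of _ "[v]"]) auto
next
  fix us assume "us \<noteq> []" "set us \<subseteq> U" "hd us \<in> F \<inter> U" "dpath (edges G) (us @ [v])" "v \<in> U" "(v, w) \<in> edges G"
  then show "w \<in> F \<or> (\<exists>us. us \<noteq> [] \<and> set us \<subseteq> U \<and> hd us \<in> F \<inter> U \<and> dpath (edges G) (us @ [w]))"
    by (intro disjI2 exI[of _ "us @ [v]"]) (auto simp: dpath_app)
qed

locale mctx =
  fixes G :: "'a hedg" and Z U :: "'a set" and x :: 'a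
  assumes hg: "is_hedg G" and ZU: "Z \<inter> U = {}" and ZN: "Z \<subseteq> nodes G" and xU: "x \<notin> U"
begin

abbreviation "M \<equiv> marg G U"

definition NU :: "'a \<Rightarrow> bool \<Rightarrow> bool" where
  "NU v h \<longleftrightarrow> (\<exists>h'. reach M Z {} x v h' \<and> (\<forall>k. cnd G Z U h k v \<longrightarrow> cnd M Z {} h' k v))"

definition SA :: "'a \<Rightarrow> bool" where
  "SA v \<longleftrightarrow> (\<exists>a ha us. a \<notin> U \<and> reach M Z {} x a ha \<and> cnd M Z {} ha Fwd a \<and>
      set us \<subseteq> U \<and> dpath (edges G) (a # us @ [v]))"

definition SB :: "'a \<Rightarrow> bool" where
  "SB v \<longleftrightarrow> (\<exists>a ha us. a \<notin> U \<and> reach M Z {} x a ha \<and> cnd M Z {} ha Bi a \<and>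
      set us \<subseteq> U \<and> dpath (edges G) (v # us @ [a]))"

definition SC :: "'a \<Rightarrow> bool" where
  "SC v \<longleftrightarrow> (\<exists>a ha F. a \<notin> U \<and> reach M Z {} x a ha \<and> cnd M Z {} ha Bi a \<and>
      F \<in> hyper G \<and> F \<subseteq> insert a U \<and> fr2 G U F a \<and> fr2 G U F v)"

definition INV :: "'a \<Rightarrow> bool \<Rightarrow> bool" where
  "INV v h \<longleftrightarrow> (v \<notin> U \<longrightarrow> NU v h) \<and> (v \<in> U \<longrightarrow> (h \<and> SA v) \<or> (\<not> h \<and> SB v) \<or> (h \<and> SC v))"

lemma E_nodes: "(a, b) \<in> edges G \<Longrightarrow> a \<in> nodes G \<and> b \<in> nodes G"
  using hg by (auto simp: is_hedg_def)

lemma reachM_nodes: "reach M Z {} x a ha \<Longrightarrow> a \<in> nodes G \<and> a \<notin> U"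
  using reach_nodes[of M Z "{}" x a ha] by simp

lemma cnd_transfer: "v \<notin> U \<Longrightarrow> v \<in> nodes G \<Longrightarrow> cnd G Z U h k v \<Longrightarrow> cnd M Z {} h k v"
  using anc_to_marg[OF hg _ ZN] ZU by (auto simp: cnd_def Int_commute)

lemma NU_of: "reach M Z {} x v h \<Longrightarrow> NU v h"
  unfolding NU_def using cnd_transfer reachM_nodes by blast

lemma cnd_Bwd_Bi: "cnd H Z V h Bwd a = cnd H Z V h Bi a"
  by (simp add: cnd_def head_left_def)

lemma medge_fwd: "a \<notin> U \<Longrightarrow> w \<notin> U \<Longrightarrow> set us \<subseteq> U \<Longrightarrow> dpath (edges G) (a # us @ [w])
   \<Longrightarrow> a \<in> nodes G \<Longrightarrow> w \<in> nodes G \<Longrightarrow> edge_ok M a Fwd w"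
  by (auto simp: edge_ok_def)

lemma medge_bwd: "a \<notin> U \<Longrightarrow> w \<notin> U \<Longrightarrow> set us \<subseteq> U \<Longrightarrow> dpath (edges G) (w # us @ [a])
   \<Longrightarrow> a \<in> nodes G \<Longrightarrow> w \<in> nodes G \<Longrightarrow> edge_ok M a Bwd w"
  by (auto simp: edge_ok_def)

lemma medge_bi:
  assumes "a \<noteq> w" "a \<notin> U" "w \<notin> U" "a \<in> nodes G" "w \<in> nodes G" "F \<in> hyper G"
    "F \<subseteq> {a, w} \<union> U" "fr2 G U F a" "fr2 G U F w"
  shows "edge_ok M a Bi w"
proof -
  have "fr G U F a" "fr G U F w" using fr2_fr[OF assms(2)] fr2_fr[OF assms(3)] assms(8,9) by simp_all
  then have "\<forall>v\<in>{a, w}. fr G U F v" by simp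
  then have "{a, w} \<subseteq> nodes G - U \<and> (\<exists>F\<in>hyper G. F \<subseteq> {a, w} \<union> U \<and> (\<forall>v\<in>{a, w}. fr G U F v))"
    using assms(2-7) by auto
  then have "{a, w} \<in> hyper M" unfolding marg_simps fr_def by (simp only: mem_Collect_eq)
  then show ?thesis using assms(1) unfolding edge_ok_def by (simp del: marg_simps)
qed

lemma close:
  assumes r: "reach M Z {} x a ha" and c: "cnd M Z {} ha Bi a" and b: "b \<notin> U" "b \<in> nodes G"
    and F: "F \<in> hyper G" "F \<subseteq> {a, b} \<union> U" "fr2 G U F a" "fr2 G U F b"
  shows "NU b True"
proof (cases "a = b")
  case True
  have "\<forall>k. cnd G Z U True k b \<longrightarrow> cnd M Z {} ha k b"
    using c True by (auto simp: cnd_def head_left_def split: if_splits)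
  then show ?thesis using r True unfolding NU_def by blast
next
  case False
  have an: "a \<notin> U" "a \<in> nodes G" using reachM_nodes[OF r] by auto
  have "edge_ok M a Bi b" by (rule medge_bi) (use False an b F in auto)
  then have "reach M Z {} x b (head_right Bi)"
    using b by (intro reach.rstep[OF r _ _ c]) auto
  then show ?thesis using NU_of by (simp add: head_right_def)
qed

end




context mctx begin

lemma step_NU:
  assumes nu: "NU v h" and v: "v \<notin> U" and e: "edge_ok G v k w" and w: "w \<in> nodes G"
    and c: "cnd G Z U h k v"
  shows "INV w (head_right k)"
proof -
  obtain h' where r: "reach M Z {} x v h'" and cM: "cnd M Z {} h' k v"
    using nu c unfolding NU_def by blast
  have vn: "v \<in> nodes G" using reachM_nodes[OF r] by simp
  show ?thesis
  proof (cases "w \<in> U")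
    case False
    have "edge_ok M v k w"
    proof (cases k)
      case Fwd
      then show ?thesis using e v False vn w by (auto simp: edge_ok_def intro!: exI[of _ "[]"])
    next
      case Bwd
      then show ?thesis using e v False vn w by (auto simp: edge_ok_def intro!: exI[of _ "[]"])
    next
      case Bi
      then have vw: "v \<noteq> w" "{v, w} \<in> hyper G" using e by (auto simp: edge_ok_def)
      have "edge_ok M v Bi w"
        by (rule medge_bi[OF vw(1) v False vn w vw(2)]) (auto simp: fr2_def)
      then show ?thesis using Bi by simp
    qed
    then have "reach M Z {} x w (head_right k)" using False w by (intro reach.rstep[OF r _ _ cM]) auto
    then show ?thesis using NU_of False unfolding INV_def by blast
  next
    case True
    show ?thesis
    proof (cases k)
      case Fwd
      have "SA w" unfolding SA_def
        by (rule exI[of _ v], rule exI[of _ h'], rule exI[of _ "[]"])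
          (use v r cM Fwd e in \<open>auto simp: edge_ok_def\<close>)
      then show ?thesis using True Fwd unfolding INV_def by (simp add: head_right_def)
    next
      case Bwd
      have "SB w" unfolding SB_def
        by (rule exI[of _ v], rule exI[of _ h'], rule exI[of _ "[]"])
          (use v r cM Bwd e in \<open>auto simp: edge_ok_def cnd_Bwd_Bi\<close>)
      then show ?thesis using True Bwd unfolding INV_def by (simp add: head_right_def)
    next
      case Bi
      then have vw: "v \<noteq> w" "{v, w} \<in> hyper G" using e by (auto simp: edge_ok_def)
      have "SC w" unfolding SC_def
        by (rule exI[of _ v], rule exI[of _ h'], rule exI[of _ "{v, w}"])
          (use v r cM Bi vw True in \<open>auto simp: fr2_def\<close>)
      then show ?thesis using True Bi unfolding INV_def by (simp add: head_right_def)
    qed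
  qed
qed

lemma step_A:
  assumes s: "SA v" and v: "v \<in> U" and e: "edge_ok G v k w" and w: "w \<in> nodes G"
    and c: "cnd G Z U True k v"
  shows "INV w (head_right k)"
proof -
  have k: "k = Fwd" using c v by (cases k) (auto simp: cnd_def head_left_def)
  then have vw: "(v, w) \<in> edges G" using e by (simp add: edge_ok_def)
  obtain a ha us where A: "a \<notin> U" "reach M Z {} x a ha" "cnd M Z {} ha Fwd a"
      "set us \<subseteq> U" "dpath (edges G) (a # us @ [v])" using s unfolding SA_def by blast
  have d: "dpath (edges G) (a # (us @ [v]) @ [w])" using dpath_app[of _ "a # us" v w] A(5) vw by simp
  have an: "a \<in> nodes G" using reachM_nodes[OF A(2)] by simp
  show ?thesis
  proof (cases "w \<in> U")
    case False
    have "edge_ok M a Fwd w" by (rule medge_fwd[OF A(1) False _ d an w]) (use A(4) v in auto)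
    then have "reach M Z {} x w (head_right Fwd)" using False w by (intro reach.rstep[OF A(2) _ _ A(3)]) auto
    then show ?thesis using NU_of False k unfolding INV_def by blast
  next
    case True
    have "SA w" unfolding SA_def using A d v by (intro exI[of _ a] exI[of _ ha] exI[of _ "us @ [v]"]) auto
    then show ?thesis using True k unfolding INV_def by (simp add: head_right_def)
  qed
qed

lemma step_B:
  assumes s: "SB v" and v: "v \<in> U" and e: "edge_ok G v k w" and w: "w \<in> nodes G"
    and c: "cnd G Z U False k v"
  shows "INV w (head_right k)"
proof -
  obtain a ha us where B: "a \<notin> U" "reach M Z {} x a ha" "cnd M Z {} ha Bi a"
      "set us \<subseteq> U" "dpath (edges G) (v # us @ [a])" using s unfolding SB_def by blast
  have an: "a \<in> nodes G" using reachM_nodes[OF B(2)] by simp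
  have vn: "v \<in> nodes G" using hg v B(5) by (cases us) (auto simp: is_hedg_def)
  have fa: "fr2 G U F a" if "v \<in> F" for F
    unfolding fr2_def using B(4,5) v that by (intro disjI2 exI[of _ "v # us"]) auto
  show ?thesis
  proof (cases k)
    case Bwd
    then have wv: "(w, v) \<in> edges G" using e by (simp add: edge_ok_def)
    have d: "dpath (edges G) (w # (v # us) @ [a])" using wv B(5) by simp
    show ?thesis
    proof (cases "w \<in> U")
      case False
      have "edge_ok M a Bwd w" by (rule medge_bwd[OF B(1) False _ d an w]) (use B(4) v in auto)
      then have "reach M Z {} x w (head_right Bwd)" using False w B(3)
        by (intro reach.rstep[OF B(2)]) (auto simp: cnd_Bwd_Bi)
      then show ?thesis using NU_of False Bwd unfolding INV_def by blast
    next
      case True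
      have "SB w" unfolding SB_def using B d v by (intro exI[of _ a] exI[of _ ha] exI[of _ "v # us"]) auto
      then show ?thesis using True Bwd unfolding INV_def by (simp add: head_right_def)
    qed
  next
    case Fwd
    then have vw: "(v, w) \<in> edges G" using e by (simp add: edge_ok_def)
    have F: "{v} \<in> hyper G" using hg vn by (auto simp: is_hedg_def)
    have fw: "fr2 G U {v} w" unfolding fr2_def using v vw by (intro disjI2 exI[of _ "[v]"]) auto
    show ?thesis
    proof (cases "w \<in> U")
      case False
      have "NU w True" by (rule close[OF B(2) B(3) False w F _ fa fw]) (use v in auto)
      then show ?thesis using False Fwd unfolding INV_def by (simp add: head_right_def)
    next
      case True
      have "SC w" unfolding SC_def using B F fa[of "{v}"] fw v
        by (intro exI[of _ a] exI[of _ ha] exI[of _ "{v}"]) auto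
      then show ?thesis using True Fwd unfolding INV_def by (simp add: head_right_def)
    qed
  next
    case Bi
    then have vw: "v \<noteq> w" and F: "{v, w} \<in> hyper G" using e by (auto simp: edge_ok_def)
    have fw: "fr2 G U {v, w} w" unfolding fr2_def by simp
    show ?thesis
    proof (cases "w \<in> U")
      case False
      have "NU w True" by (rule close[OF B(2) B(3) False w F _ fa fw]) (use v in auto)
      then show ?thesis using False Bi unfolding INV_def by (simp add: head_right_def)
    next
      case True
      have "SC w" unfolding SC_def using B F fa[of "{v, w}"] fw v True
        by (intro exI[of _ a] exI[of _ ha] exI[of _ "{v, w}"]) auto
      then show ?thesis using True Bi unfolding INV_def by (simp add: head_right_def)
    qed
  qed
qed

lemma step_C:
  assumes s: "SC v" and v: "v \<in> U" and e: "edge_ok G v k w" and w: "w \<in> nodes G"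
    and c: "cnd G Z U True k v"
  shows "INV w (head_right k)"
proof -
  have k: "k = Fwd" using c v by (cases k) (auto simp: cnd_def head_left_def)
  then have vw: "(v, w) \<in> edges G" using e by (simp add: edge_ok_def)
  obtain a ha F where C: "a \<notin> U" "reach M Z {} x a ha" "cnd M Z {} ha Bi a"
      "F \<in> hyper G" "F \<subseteq> insert a U" "fr2 G U F a" "fr2 G U F v" using s unfolding SC_def by blast
  have fw: "fr2 G U F w" by (rule fr2_step[OF C(7) v vw])
  show ?thesis
  proof (cases "w \<in> U")
    case False
    have "NU w True" by (rule close[OF C(2) C(3) False w C(4) _ C(6) fw]) (use C(5) in auto)
    then show ?thesis using False k unfolding INV_def by (simp add: head_right_def)
  next
    case True
    have "SC w" unfolding SC_def using C fw by blast
    then show ?thesis using True k unfolding INV_def by (simp add: head_right_def)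
  qed
qed

lemma inv_reach: "reach G Z U x v h \<Longrightarrow> INV v h"
proof (induction rule: reach.induct)
  case rstart
  have "reach M Z {} x x False" using rstart xU by (intro reach.rstart) auto
  then show ?case using NU_of xU unfolding INV_def by blast
next
  case (rstep v h k w)
  show ?case
  proof (cases "v \<in> U")
    case False
    then show ?thesis using step_NU rstep unfolding INV_def by blast
  next
    case True
    then have "(h \<and> SA v) \<or> (\<not> h \<and> SB v) \<or> (h \<and> SC v)" using rstep.IH unfolding INV_def by blast
    then show ?thesis using step_A[OF _ True rstep.hyps(2,3)] step_B[OF _ True rstep.hyps(2,3)]
        step_C[OF _ True rstep.hyps(2,3)] rstep.hyps(4) by (cases h) auto
  qed
qed

end


theorem mainTheorem18:
  fixes G :: "'a hedg" and X Y Z U :: "'a set"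
  assumes "is_hedg G"
    and "X \<subseteq> nodes G" and "Y \<subseteq> nodes G" and "Z \<subseteq> nodes G" and "U \<subseteq> nodes G"
    and "U \<inter> (X \<union> Y \<union> Z) = {}"
  shows "dsep G X Y Z \<longleftrightarrow> dsep (marg G U) X Y Z"
proof -
  have ZU: "Z \<inter> U = {}" using assms(6) by auto
  have "(\<exists>x y h. ((x\<in>X \<and> y\<in>Y) \<or> (x\<in>Y \<and> y\<in>X)) \<and> reach G Z {} x y h \<and> y \<notin> Z) \<longleftrightarrow>
        (\<exists>x y h. ((x\<in>X \<and> y\<in>Y) \<or> (x\<in>Y \<and> y\<in>X)) \<and> reach (marg G U) Z {} x y h \<and> y \<notin> Z)"
  proof
    assume "\<exists>x y h. ((x\<in>X \<and> y\<in>Y) \<or> (x\<in>Y \<and> y\<in>X)) \<and> reach G Z {} x y h \<and> y \<notin> Z"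
    then obtain x y h where A: "((x\<in>X \<and> y\<in>Y) \<or> (x\<in>Y \<and> y\<in>X))" "reach G Z {} x y h" "y \<notin> Z"
      by blast
    have xy: "x \<notin> U" "y \<notin> U" using A(1) assms(6) by auto
    interpret mctx G Z U x using assms(1,4) ZU xy by unfold_locales auto
    have "INV y h" using inv_reach phase1[OF assms(1) ZU A(2)] by blast
    then obtain h' where "reach (marg G U) Z {} x y h'" using xy unfolding INV_def NU_def by blast
    then show "\<exists>x y h. ((x\<in>X \<and> y\<in>Y) \<or> (x\<in>Y \<and> y\<in>X)) \<and> reach (marg G U) Z {} x y h \<and> y \<notin> Z"
      using A by blast
  next
    assume "\<exists>x y h. ((x\<in>X \<and> y\<in>Y) \<or> (x\<in>Y \<and> y\<in>X)) \<and> reach (marg G U) Z {} x y h \<and> y \<notin> Z"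
    then show "\<exists>x y h. ((x\<in>X \<and> y\<in>Y) \<or> (x\<in>Y \<and> y\<in>X)) \<and> reach G Z {} x y h \<and> y \<notin> Z"
      using dir1[OF assms(1) ZU] by blast
  qed
  then show ?thesis using dsep_reach[of G X Y Z] dsep_reach[of "marg G U" X Y Z] by blast
qed


end
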